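(* Let $\tau\ge\tfrac32$. For every family of probability distributions $\{p(a,b|x,y)\}_{a,b,x,y\in\{0,1\}}$ satisfying the no-signaling conditions (i.e. the marginals $p_A(a|x)=\sum_b p(a,b|x,y)$ are independent of $y$ and $p_B(b|y)=\sum_a p(a,b|x,y)$ are independent of $x$), in particular for all distributions arising from quantum states and local measurements, one has $S^{(\tau)}=p(0,0|0,0)-p(0,0|1,1)+(1-\tau)[p(0,0|0,1)+p(0,0|1,0)]-\tau[p(0,1|0,1)+p(1,0|1,0)]\le 0.$
   Context: $p(a,b|x,y)$ denotes the joint probability of outcomes $a,b\in\{0,1\}$ for Alice and Bob given their measurement settings $x,y\in\{0,1\}$; each $p(\cdot,\cdot|x,y)$ is a probability distribution on $\{0,1\}^2$. *)

theory Defs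
  imports Complex_Main
begin

text \<open>A behaviour p a b x y = p(a,b|x,y), with outcomes a,b and settings x,y in {0,1}.\<close>

definition is_behaviour :: "(nat \<Rightarrow> nat \<Rightarrow> nat \<Rightarrow> nat \<Rightarrow> real) \<Rightarrow> bool" where
  "is_behaviour p \<longleftrightarrow>
     (\<forall>x\<in>{0,1}. \<forall>y\<in>{0,1}.
        (\<forall>a\<in>{0,1}. \<forall>b\<in>{0,1}. p a b x y \<ge> 0) \<and>
        (\<Sum>a\<in>{0::nat,1}. \<Sum>b\<in>{0::nat,1}. p a b x y) = 1)"

definition no_signaling :: "(nat \<Rightarrow> nat \<Rightarrow> nat \<Rightarrow> nat \<Rightarrow> real) \<Rightarrow> bool" where
  "no_signaling p \<longleftrightarrow>
     (\<forall>a\<in>{0,1}. \<forall>x\<in>{0,1}. \<forall>y\<in>{0,1}. \<forall>y'\<in>{0,1}.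
        (\<Sum>b\<in>{0::nat,1}. p a b x y) = (\<Sum>b\<in>{0::nat,1}. p a b x y')) \<and>
     (\<forall>b\<in>{0,1}. \<forall>y\<in>{0,1}. \<forall>x\<in>{0,1}. \<forall>x'\<in>{0,1}.
        (\<Sum>a\<in>{0::nat,1}. p a b x y) = (\<Sum>a\<in>{0::nat,1}. p a b x' y))"

definition S_tau :: "real \<Rightarrow> (nat \<Rightarrow> nat \<Rightarrow> nat \<Rightarrow> nat \<Rightarrow> real) \<Rightarrow> real" where
  "S_tau \<tau> p = p 0 0 0 0 - p 0 0 1 1 + (1 - \<tau>) * (p 0 0 0 1 + p 0 0 1 0)
                 - \<tau> * (p 0 1 0 1 + p 1 0 1 0)"

end

theory Submission
  imports Defs
begin

theorem mainTheorem2: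
  fixes \<tau> :: real and p :: "nat \<Rightarrow> nat \<Rightarrow> nat \<Rightarrow> nat \<Rightarrow> real"
  assumes "\<tau> \<ge> 3/2" and "is_behaviour p" and "no_signaling p"
  shows "S_tau \<tau> p \<le> 0"
proof -
  have nn: "\<And>a b x y. a\<in>{0,1} \<Longrightarrow> b\<in>{0,1} \<Longrightarrow> x\<in>{0,1} \<Longrightarrow> y\<in>{0,1} \<Longrightarrow> p a b x y \<ge> 0"
    using assms(2) unfolding is_behaviour_def by blast
  have n1: "p 0 0 0 0 + p 0 1 0 0 = p 0 0 0 1 + p 0 1 0 1"
    using assms(3) unfolding no_signaling_def by (drule_tac conjunct1) (drule bspec[of _ _ 0], simp, drule bspec[of _ _ 0], simp, drule bspec[of _ _ 0], simp, drule bspec[of _ _ 1], simp, simp)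
  have n2: "p 0 0 0 0 + p 1 0 0 0 = p 0 0 1 0 + p 1 0 1 0"
    using assms(3) unfolding no_signaling_def by (drule_tac conjunct2) (drule bspec[of _ _ 0], simp, drule bspec[of _ _ 0], simp, drule bspec[of _ _ 0], simp, drule bspec[of _ _ 1], simp, simp)
  have a: "p 0 1 0 0 \<ge> 0" "p 1 0 0 0 \<ge> 0" "p 0 0 1 1 \<ge> 0" "p 0 0 0 1 \<ge> 0" "p 0 0 1 0 \<ge> 0"
    "p 0 1 0 1 \<ge> 0" "p 1 0 1 0 \<ge> 0" by (auto intro: nn)
  define s where "s = p 0 0 0 1 + p 0 0 1 0 + p 0 1 0 1 + p 1 0 1 0"
  have "s \<ge> 0" using a s_def by simp
  hence "\<tau> * s \<ge> 3/2 * s" using assms(1) using mult_right_mono[of "3/2" \<tau> s] by simp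
  thus ?thesis unfolding S_tau_def using a n1 n2 s_def by (simp add: algebra_simps)
qed

end
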